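(* Let $B$ be a finite set of closed, bounded line segments in $\mathbb{R}^2$, let $B_i$ be one of its connected components, and let $p\in\mathbb{R}^2$. Then every point of $\mathbb{R}^2\setminus (L_p(B_i)\cup B_i)$ is a clear point with respect to $B_i$, i.e., through every such point there passes a line that does not intersect $B_i$.
   Context: The connected components of $B$ are the connected components of the union of its segments; each $B_i$ is a union of segments of $B$, and $\mathrm{Conv}(B_i)$ denotes its convex hull. For a point $p\in\mathbb{R}^2$, the set $L_p(B_i)\subseteq\mathbb{R}^2$ is defined by: (1) if $B_i$ is a single line segment and $p$ is collinear with it, $L_p(B_i)=\emptyset$; (2) otherwise, if $p$ is a vertex of $\mathrm{Conv}(B_i)$, $L_p(B_i)$ is the closed double wedge bounded by the lines supporting the two edges of $\mathrm{Conv}(B_i)$ meeting at $p$ (the double wedge containing $\mathrm{Conv}(B_i)$); (3) otherwise, if $p$ lies in $\mathrm{Conv}(B_i)$ (interior or boundary), $L_p(B_i)=\mathbb{R}^2$; (4) otherwise, $L_p(B_i)$ is the closed double wedge bounded by the two tangent lines from $p$ to $\mathrm{Conv}(B_i)$ (the double wedge containing $\mathrm{Conv}(B_i)$). A point is blocked with respect to a set of segments $S$ if every line through it meets $S$, and clear otherwise. *)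

theory Defs
  imports "HOL-Analysis.Analysis"
begin

definition line_through :: "real^2 \<Rightarrow> real^2 \<Rightarrow> (real^2) set" where
  "line_through q d = {q + t *\<^sub>R d | t. True}"

definition clear_pt :: "(real^2) set \<Rightarrow> real^2 \<Rightarrow> bool" where
  "clear_pt S q \<longleftrightarrow> (\<exists>d. d \<noteq> 0 \<and> line_through q d \<inter> S = {})"

text \<open>Closed double wedge with apex p bounded by the lines p + R d1 and p + R d2
  (the pair of opposite sectors spanned by d1, d2).\<close>
definition dwedge :: "real^2 \<Rightarrow> real^2 \<Rightarrow> real^2 \<Rightarrow> (real^2) set" where
  "dwedge p d1 d2 = {p + s *\<^sub>R d1 + t *\<^sub>R d2 | s t. s * t \<ge> 0}"

text \<open>d is the direction of a tangent line from p to the convex set K.\<close>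
definition tangent_dir :: "(real^2) set \<Rightarrow> real^2 \<Rightarrow> real^2 \<Rightarrow> bool" where
  "tangent_dir K p d \<longleftrightarrow> d \<noteq> 0 \<and> line_through p d \<inter> K \<noteq> {} \<and>
     (\<exists>n. n \<noteq> 0 \<and> n \<bullet> d = 0 \<and> (\<forall>x\<in>K. n \<bullet> (x - p) \<ge> 0))"

definition edge_dir :: "(real^2) set \<Rightarrow> real^2 \<Rightarrow> real^2 \<Rightarrow> bool" where
  "edge_dir K p d \<longleftrightarrow> d \<noteq> 0 \<and>
     (\<exists>E. E face_of K \<and> aff_dim E = 1 \<and> p \<in> E \<and> affine hull E = line_through p d)"

text \<open>The closed double wedge bounded by two distinct lines through p whose directions
  satisfy P, namely the one containing K.\<close>
definition wedge_by :: "(real^2 \<Rightarrow> bool) \<Rightarrow> real^2 \<Rightarrow> (real^2) set \<Rightarrow> (real^2) set" where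
  "wedge_by P p K = \<Union>{dwedge p d1 d2 | d1 d2. P d1 \<and> P d2 \<and> \<not> collinear {0, d1, d2}
                        \<and> K \<subseteq> dwedge p d1 d2}"

definition Lp :: "(real^2) set \<Rightarrow> real^2 \<Rightarrow> (real^2) set" where
  "Lp C p = (let K = convex hull C in
     if (\<exists>a b. C = closed_segment a b) \<and> collinear (insert p C) then {}
     else if p extreme_point_of K then wedge_by (edge_dir K p) p K
     else if p \<in> K then UNIV
     else wedge_by (tangent_dir K p) p K)"

end

theory Submission
  imports Defs
begin


definition rot :: "real^2 \<Rightarrow> real^2" where "rot d = vector [- d$2, d$1]"
definition cr :: "real^2 \<Rightarrow> real^2 \<Rightarrow> real" where "cr a b = rot a \<bullet> b"

lemma inner2: "(x::real^2) \<bullet> y = x$1*y$1 + x$2*y$2"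
  by (simp add: inner_vec_def sum_2)
lemma vec2_eq: "(x::real^2) = y \<longleftrightarrow> x$1 = y$1 \<and> x$2 = y$2"
  by (simp add: vec_eq_iff forall_2)
lemma cr_eq: "cr a b = a$1*b$2 - a$2*b$1"
  by (simp add: cr_def rot_def inner2)
lemma rot_comp [simp]: "rot d $ 1 = - d$2" "rot d $ 2 = d$1"
  by (simp_all add: rot_def)

lemma cr_self [simp]: "cr a a = 0" by (simp add: cr_eq)
lemma cr_add_right: "cr a (b + c) = cr a b + cr a c" by (simp add: cr_eq algebra_simps)
lemma cr_scale_right: "cr a (t *\<^sub>R b) = t * cr a b" by (simp add: cr_eq algebra_simps)
lemma cr_add_left: "cr (b + c) a = cr b a + cr c a" by (simp add: cr_eq algebra_simps)
lemma cr_scale_left: "cr (t *\<^sub>R b) a = t * cr b a" by (simp add: cr_eq algebra_simps)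
lemma cr_diff_right: "cr a (b - c) = cr a b - cr a c" by (simp add: cr_eq algebra_simps)
lemma cr_diff_left: "cr (b - c) a = cr b a - cr c a" by (simp add: cr_eq algebra_simps)
lemma cr_anti: "cr a b = - cr b a" by (simp add: cr_eq)

lemma decomp:
  assumes "cr d1 d2 \<noteq> 0"
  shows "w = (cr w d2 / cr d1 d2) *\<^sub>R d1 + (cr d1 w / cr d1 d2) *\<^sub>R d2"
proof -
  have "cr d1 d2 *\<^sub>R w = cr w d2 *\<^sub>R d1 + cr d1 w *\<^sub>R d2"
    by (simp add: vec2_eq cr_eq algebra_simps)
  hence "(1 / cr d1 d2) *\<^sub>R (cr d1 d2 *\<^sub>R w) = (1 / cr d1 d2) *\<^sub>R (cr w d2 *\<^sub>R d1 + cr d1 w *\<^sub>R d2)"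
    by simp
  thus ?thesis using assms by (simp add: scaleR_add_right)
qed

lemma lagrange: "(n\<bullet>a)*(cr n b) - (cr n a)*(n\<bullet>b) = (n\<bullet>n) * cr a b"
  by (simp add: cr_eq inner2 algebra_simps)

lemma ortho: "(n\<bullet>n) *\<^sub>R w = (n\<bullet>w) *\<^sub>R n + (cr n w) *\<^sub>R rot n"
  by (simp add: vec2_eq cr_eq inner2 algebra_simps)

lemma line_hull: "line_through p d = affine hull {p, p+d}"
  by (simp add: line_through_def affine_hull_2_alt) blast

lemma rot_eq0 [simp]: "rot d = 0 \<longleftrightarrow> d = 0"
  by (auto simp add: vec2_eq)




lemma cr_rot: "cr v (rot v) = v \<bullet> v" by (simp add: cr_eq inner2)
lemma inner_rot: "v \<bullet> rot v = 0" by (simp add: inner2)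
lemma cr0_left [simp]: "cr 0 v = 0" by (simp add: cr_eq)
lemma rot_inner_self [simp]: "rot v \<bullet> v = 0" by (simp add: inner2)
lemma cr_swap: "cr w d = - (rot d \<bullet> w)" by (simp add: cr_eq inner2)
lemma cr0_right [simp]: "cr v 0 = 0" by (simp add: cr_eq)

lemma cone_dwedge:
  assumes c: "cr d1 d2 > 0" and K: "K \<subseteq> {x. cr d1 (x-p) \<ge> 0 \<and> cr (x-p) d2 \<ge> 0}"
  shows "K \<subseteq> dwedge p d1 d2"
proof
  fix x assume "x \<in> K"
  with K have h: "cr d1 (x-p) \<ge> 0" "cr (x-p) d2 \<ge> 0" by auto
  have "x - p = (cr (x-p) d2 / cr d1 d2) *\<^sub>R d1 + (cr d1 (x-p) / cr d1 d2) *\<^sub>R d2"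
    using decomp c by simp
  hence "x = p + (cr (x-p) d2 / cr d1 d2) *\<^sub>R d1 + (cr d1 (x-p) / cr d1 d2) *\<^sub>R d2"
    by (simp add: algebra_simps)
  moreover have "(cr (x-p) d2 / cr d1 d2) * (cr d1 (x-p) / cr d1 d2) \<ge> 0"
    using h c by simp
  ultimately show "x \<in> dwedge p d1 d2" unfolding dwedge_def by blast
qed

lemma cone_clear:
  assumes c: "cr d1 d2 > 0" and K: "K \<subseteq> {x. cr d1 (x-p) \<ge> 0 \<and> cr (x-p) d2 \<ge> 0}"
    and q: "q \<notin> dwedge p d1 d2"
  shows "clear_pt K q"
proof -
  have d1: "d1 \<noteq> 0" and d2: "d2 \<noteq> 0" using c by (auto simp: cr_eq)
  consider "cr d1 (q-p) < 0" | "cr (q-p) d2 < 0" | "cr d1 (q-p) \<ge> 0" "cr (q-p) d2 \<ge> 0" by linarith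
  then show ?thesis
  proof cases
    case 1
    have "line_through q d1 \<inter> K = {}"
    proof (rule ccontr)
      assume "line_through q d1 \<inter> K \<noteq> {}"
      then obtain t where "q + t *\<^sub>R d1 \<in> K" unfolding line_through_def by blast
      with K have "cr d1 (q + t *\<^sub>R d1 - p) \<ge> 0" by auto
      moreover have "q + t *\<^sub>R d1 - p = (q - p) + t *\<^sub>R d1" by simp
      ultimately show False using 1 by (simp only: cr_add_right cr_scale_right) simp
    qed
    then show ?thesis using d1 unfolding clear_pt_def by blast
  next
    case 2
    have "line_through q d2 \<inter> K = {}"
    proof (rule ccontr)
      assume "line_through q d2 \<inter> K \<noteq> {}"
      then obtain t where "q + t *\<^sub>R d2 \<in> K" unfolding line_through_def by blast
      with K have "cr (q + t *\<^sub>R d2 - p) d2 \<ge> 0" by auto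
      moreover have "q + t *\<^sub>R d2 - p = (q - p) + t *\<^sub>R d2" by simp
      ultimately show False using 2 by (simp only: cr_add_left cr_scale_left) simp
    qed
    then show ?thesis using d2 unfolding clear_pt_def by blast
  next
    case 3
    have "{q} \<subseteq> dwedge p d1 d2" using cone_dwedge[OF c, of "{q}" p] 3 by auto
    with q show ?thesis by auto
  qed
qed

lemma seg_clear:
  assumes q: "q \<notin> closed_segment a b"
  shows "clear_pt (closed_segment a b) q"
proof -
  have seg: "x \<in> closed_segment a b \<Longrightarrow> cr (b-a) (x-a) = 0" for x
  proof -
    assume "x \<in> closed_segment a b"
    then obtain u where "x = (1-u) *\<^sub>R a + u *\<^sub>R b" unfolding closed_segment_def by blast
    hence "x - a = u *\<^sub>R (b - a)" by (simp add: algebra_simps)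
    thus ?thesis by (simp add: cr_scale_right)
  qed
  show ?thesis
  proof (cases "cr (b-a) (q-a) = 0")
    case False
    hence ne: "b - a \<noteq> 0" by auto
    have "line_through q (b-a) \<inter> closed_segment a b = {}"
    proof (rule ccontr)
      assume "line_through q (b-a) \<inter> closed_segment a b \<noteq> {}"
      then obtain t where "q + t *\<^sub>R (b-a) \<in> closed_segment a b" unfolding line_through_def by blast
      hence "cr (b-a) (q + t *\<^sub>R (b-a) - a) = 0" by (rule seg)
      moreover have "q + t *\<^sub>R (b-a) - a = (q - a) + t *\<^sub>R (b-a)" by simp
      ultimately show False using False by (simp only: cr_add_right cr_scale_right) simp
    qed
    thus ?thesis using ne unfolding clear_pt_def by blast
  next
    case True
    show ?thesis
    proof (cases "a = b")
      case ab: True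
      hence qa: "a - q \<noteq> 0" using q by auto
      have "line_through q (rot (a-q)) \<inter> closed_segment a b = {}"
      proof (rule ccontr)
        assume "line_through q (rot (a-q)) \<inter> closed_segment a b \<noteq> {}"
        then obtain x where x1: "x \<in> line_through q (rot (a-q))" and x2: "x \<in> closed_segment a b" by blast
        from x1 obtain t where "x = q + t *\<^sub>R rot (a-q)" unfolding line_through_def by blast
        moreover from x2 ab have "x = a" by simp
        ultimately have "q + t *\<^sub>R rot (a-q) = a" by simp
        hence "a - q = t *\<^sub>R rot (a-q)" by (simp add: algebra_simps)
        hence "(a-q) \<bullet> (a-q) = t * ((a-q) \<bullet> rot (a-q))" by (metis inner_scaleR_right)
        thus False using qa by (simp add: inner_rot)
      qed
      moreover have "rot (a-q) \<noteq> 0" using qa by simp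
      ultimately show ?thesis unfolding clear_pt_def by blast
    next
      case False
      hence ne: "b - a \<noteq> 0" by auto
      have "line_through q (rot (b-a)) \<inter> closed_segment a b = {}"
      proof (rule ccontr)
        assume "line_through q (rot (b-a)) \<inter> closed_segment a b \<noteq> {}"
        then obtain t where t: "q + t *\<^sub>R rot (b-a) \<in> closed_segment a b" unfolding line_through_def by blast
        hence "cr (b-a) (q + t *\<^sub>R rot (b-a) - a) = 0" by (rule seg)
        moreover have "q + t *\<^sub>R rot(b-a) - a = (q - a) + t *\<^sub>R rot (b-a)" by simp
        ultimately have "t * ((b-a) \<bullet> (b-a)) = 0" using True
          by (simp only: cr_add_right cr_scale_right cr_rot)
        hence "t = 0" using ne by simp
        thus False using t q by simp
      qed
      moreover have "rot (b-a) \<noteq> 0" using ne by simp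
      ultimately show ?thesis unfolding clear_pt_def by blast
    qed
  qed
qed




lemma cone_exists:
  fixes K :: "(real^2) set"
  assumes cK: "compact K" and vK: "convex K" and ne: "K \<noteq> {}" and pK: "p \<notin> K"
  shows "(\<exists>d. d \<noteq> 0 \<and> K \<subseteq> line_through p d) \<or>
    (\<exists>y1\<in>K. \<exists>y2\<in>K. cr (y1-p) (y2-p) > 0 \<and> K \<subseteq> {x. cr (y1-p) (x-p) \<ge> 0 \<and> cr (x-p) (y2-p) \<ge> 0})"
proof -
  obtain n b where nb: "n \<bullet> p < b" "\<forall>x\<in>K. b < n \<bullet> x"
    using separating_hyperplane_closed_point[OF vK compact_imp_closed[OF cK] pK] by blast
  have A: "n \<bullet> (x - p) > 0" if "x \<in> K" for x
    using nb that by (auto simp: inner_diff_right)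
  have n0: "n \<noteq> 0" using A ne by fastforce
  have nn: "n \<bullet> n > 0" using n0 by simp
  define r where "r x = cr n (x-p) / (n \<bullet> (x - p))" for x
  have C: "cr n (x-p) = r x * (n \<bullet> (x - p))" if "x \<in> K" for x
    using A[OF that] by (simp add: r_def)
  have cont: "continuous_on K r"
    unfolding r_def cr_def using A by (intro continuous_intros) (auto simp del: inner_diff_right, fastforce)
  obtain y1 where y1: "y1 \<in> K" "\<forall>y\<in>K. r y1 \<le> r y"
    using continuous_attains_inf[OF cK ne cont] by blast
  obtain y2 where y2: "y2 \<in> K" "\<forall>y\<in>K. r y \<le> r y2"
    using continuous_attains_sup[OF cK ne cont] by blast
  show ?thesis
  proof (cases "r y1 = r y2")
    case True
    define d where "d = n + r y1 *\<^sub>R rot n"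
    have "n \<bullet> d = n \<bullet> n" by (simp add: d_def inner_add_right inner_rot)
    hence d0: "d \<noteq> 0" using nn by auto
    have "K \<subseteq> line_through p d"
    proof
      fix y assume y: "y \<in> K"
      have ry: "r y = r y1" using y1 y2 y True by (metis order_antisym)
      have "(n \<bullet> n) *\<^sub>R (y - p) = (n \<bullet> (y-p)) *\<^sub>R n + (cr n (y-p)) *\<^sub>R rot n" by (rule ortho)
      also have "\<dots> = (n \<bullet> (y-p)) *\<^sub>R d"
      proof -
        have "cr n (y-p) = r y1 * (n \<bullet> (y-p))" using C[OF y] ry by simp
        thus ?thesis by (simp only: d_def scaleR_add_right scaleR_scaleR mult.commute)
      qed
      finally have "(1/(n\<bullet>n)) *\<^sub>R ((n \<bullet> n) *\<^sub>R (y - p)) = (1/(n\<bullet>n)) *\<^sub>R ((n \<bullet> (y-p)) *\<^sub>R d)" by simp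
      hence "y - p = ((n \<bullet> (y-p)) / (n\<bullet>n)) *\<^sub>R d" using nn by simp
      hence "y = p + ((n \<bullet> (y-p)) / (n\<bullet>n)) *\<^sub>R d" by (simp add: algebra_simps)
      thus "y \<in> line_through p d" unfolding line_through_def by blast
    qed
    thus ?thesis using d0 by blast
  next
    case False
    hence lt: "r y1 < r y2" using y1 y2 by (meson order_le_less)
    have key: "(n \<bullet> n) * cr (a-p) (c-p) = (n \<bullet> (a-p)) * (n \<bullet> (c-p)) * (r c - r a)"
      if "a \<in> K" "c \<in> K" for a c
      using lagrange[of n "a-p" "c-p"] C[OF that(1)] C[OF that(2)] by (simp add: algebra_simps)
    have pos: "cr (a-p) (c-p) \<ge> 0" if "a \<in> K" "c \<in> K" "r a \<le> r c" for a c
    proof -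
      have "(n \<bullet> n) * cr (a-p) (c-p) \<ge> 0" using key[OF that(1,2)] A[OF that(1)] A[OF that(2)] that(3)
        by simp
      thus ?thesis using nn by (simp add: zero_le_mult_iff)
    qed
    have "(n \<bullet> n) * cr (y1-p) (y2-p) > 0" using key[OF y1(1) y2(1)] A[OF y1(1)] A[OF y2(1)] lt
      by simp
    hence "cr (y1-p) (y2-p) > 0" using nn by (simp add: zero_less_mult_iff)
    moreover have "K \<subseteq> {x. cr (y1-p) (x-p) \<ge> 0 \<and> cr (x-p) (y2-p) \<ge> 0}"
      using pos y1 y2 by auto
    ultimately show ?thesis using y1 y2 by blast
  qed
qed




lemma lineseg:
  fixes S :: "(real^2) set"
  assumes cS: "compact S" and conS: "connected S" and ne: "S \<noteq> {}"
    and L: "S \<subseteq> line_through p d" and d0: "d \<noteq> 0"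
  shows "\<exists>a b. S = closed_segment a b"
proof -
  define g where "g x = ((x - p) \<bullet> d) / (d \<bullet> d)" for x
  define f where "f t = p + t *\<^sub>R d" for t
  have dd: "d \<bullet> d > 0" using d0 by simp
  have fg: "f (g x) = x" if "x \<in> S" for x
  proof -
    from that L obtain t where x: "x = p + t *\<^sub>R d" unfolding line_through_def by blast
    hence "g x = t" using dd by (simp add: g_def)
    thus ?thesis using x by (simp add: f_def)
  qed
  define T where "T = g ` S"
  have cg: "continuous_on S g" unfolding g_def using dd by (intro continuous_intros) auto
  have cT: "compact T" unfolding T_def using compact_continuous_image[OF cg cS] .
  have conT: "connected T" unfolding T_def using connected_continuous_image[OF cg conS] .
  have neT: "T \<noteq> {}" using ne by (simp add: T_def)
  have iT: "is_interval T" using conT is_interval_connected_1 by blast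
  obtain a0 where a0: "a0 \<in> T" "\<forall>t\<in>T. a0 \<le> t"
    using continuous_attains_inf[OF cT neT continuous_on_id] by auto
  obtain b0 where b0: "b0 \<in> T" "\<forall>t\<in>T. t \<le> b0"
    using continuous_attains_sup[OF cT neT continuous_on_id] by auto
  have TI: "T = {a0..b0}"
  proof
    show "T \<subseteq> {a0..b0}"
    proof
      fix x assume "x \<in> T"
      hence "a0 \<le> x" "x \<le> b0" using a0(2) b0(2) by blast+
      thus "x \<in> {a0..b0}" by simp
    qed
    show "{a0..b0} \<subseteq> T"
    proof
      fix x assume "x \<in> {a0..b0}"
      hence "a0 \<le> x" "x \<le> b0" by simp_all
      thus "x \<in> T" using iT[unfolded is_interval_1] a0(1) b0(1) by blast
    qed
  qed
  have SfT: "S = f ` T"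
  proof
    show "S \<subseteq> f ` T"
    proof
      fix x assume x: "x \<in> S"
      have "g x \<in> T" unfolding T_def using x by blast
      thus "x \<in> f ` T" using fg[OF x] by (metis image_eqI)
    qed
    show "f ` T \<subseteq> S" unfolding T_def using fg by auto
  qed
  have comb: "(1-u) *\<^sub>R f a0 + u *\<^sub>R f b0 = f ((1-u)*a0 + u*b0)" for u
    by (simp add: f_def algebra_simps)
  have "S = closed_segment (f a0) (f b0)"
  proof
    show "S \<subseteq> closed_segment (f a0) (f b0)"
    proof
      fix x assume "x \<in> S"
      then obtain t where t: "t \<in> {a0..b0}" "x = f t" using SfT TI by auto
      show "x \<in> closed_segment (f a0) (f b0)"
      proof (cases "a0 = b0")
        case True thus ?thesis using t by simp
      next
        case False
        hence ab: "a0 < b0" using a0 b0 by force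
        define u where "u = (t - a0) / (b0 - a0)"
        have u: "0 \<le> u" "u \<le> 1" using t ab by (auto simp: u_def divide_simps)
        have "u*(b0-a0) = t - a0" using ab by (simp add: u_def)
        hence "(1-u)*a0 + u*b0 = t" by (simp add: algebra_simps)
        hence "x = (1-u) *\<^sub>R f a0 + u *\<^sub>R f b0" using comb t by simp
        thus ?thesis unfolding closed_segment_def using u by blast
      qed
    qed
    show "closed_segment (f a0) (f b0) \<subseteq> S"
    proof
      fix x assume "x \<in> closed_segment (f a0) (f b0)"
      then obtain u where u: "0 \<le> u" "u \<le> 1" "x = (1-u) *\<^sub>R f a0 + u *\<^sub>R f b0"
        unfolding closed_segment_def by blast
      have ab: "a0 \<le> b0" using a0 b0 by auto
      have e1: "(1-u)*a0 + u*b0 = a0 + u*(b0-a0)" by (simp add: algebra_simps)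
      have e2: "(1-u)*a0 + u*b0 = b0 - (1-u)*(b0-a0)" by (simp add: algebra_simps)
      have "u*(b0-a0) \<ge> 0" "(1-u)*(b0-a0) \<ge> 0" using u ab by simp_all
      hence "a0 \<le> (1-u)*a0 + u*b0" "(1-u)*a0 + u*b0 \<le> b0" using e1 e2 by linarith+
      hence "(1-u)*a0 + u*b0 \<in> T" using TI by auto
      thus "x \<in> S" using u comb SfT by auto
    qed
  qed
  thus ?thesis by blast
qed

lemma line_collinear:
  assumes "S \<subseteq> line_through p d"
  shows "collinear (insert p S)"
proof -
  have "insert p S \<subseteq> affine hull {p, p+d}"
    using assms unfolding line_hull by (auto intro: hull_inc)
  moreover have "collinear (affine hull {p, p+d})" by (simp add: collinear_affine_hull_collinear collinear_2)
  ultimately show ?thesis using collinear_subset by blast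
qed




lemma clear_mono: "clear_pt K q \<Longrightarrow> A \<subseteq> K \<Longrightarrow> clear_pt A q"
  unfolding clear_pt_def by blast

lemma finish:
  assumes c: "cr d1 d2 > 0" and K: "K \<subseteq> {x. cr d1 (x-p) \<ge> 0 \<and> cr (x-p) d2 \<ge> 0}"
    and P: "P d1" "P d2" and q: "q \<notin> wedge_by P p K" and A: "A \<subseteq> K"
  shows "clear_pt A q"
proof -
  have nc: "\<not> collinear {0, d1, d2}"
  proof
    assume "collinear {0, d1, d2}"
    then consider "d1 = 0" | "d2 = 0" | c where "d2 = c *\<^sub>R d1" unfolding collinear_lemma by blast
    thus False using c by cases (auto simp: cr_scale_right cr_eq)
  qed
  have "K \<subseteq> dwedge p d1 d2" by (rule cone_dwedge[OF c K])
  hence "q \<notin> dwedge p d1 d2" using q nc P unfolding wedge_by_def by blast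
  hence "clear_pt K q" by (rule cone_clear[OF c K])
  thus ?thesis using A by (rule clear_mono)
qed

lemma line_affine: "affine (line_through p d)"
  unfolding line_hull by (rule affine_affine_hull)

lemma line_convex: "convex (line_through p d)"
  using line_affine affine_imp_convex by blast

lemma p_in_line: "p \<in> line_through p d"
  unfolding line_through_def by (rule CollectI, rule exI[of _ 0]) simp

lemma edge_from:
  assumes vK: "convex K" and pK: "p \<in> K" and pdK: "p + d \<in> K" and d0: "d \<noteq> 0"
    and ge: "\<And>x. x \<in> K \<Longrightarrow> a \<bullet> x \<ge> a \<bullet> p" and ad: "a \<bullet> d = 0"
    and onl: "\<And>x. x \<in> K \<Longrightarrow> a \<bullet> x = a \<bullet> p \<Longrightarrow> x \<in> line_through p d"
  shows "edge_dir K p d"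
proof -
  define E where "E = K \<inter> {x. a \<bullet> x = a \<bullet> p}"
  have face: "E face_of K" unfolding E_def using face_of_Int_supporting_hyperplane_ge[OF vK] ge by blast
  have pE: "p \<in> E" using pK by (simp add: E_def)
  have pdE: "p + d \<in> E" using pdK ad by (simp add: E_def inner_add_right)
  have EL: "E \<subseteq> affine hull {p, p+d}" using onl unfolding E_def line_hull by blast
  have "affine hull E = affine hull {p, p+d}"
  proof
    show "affine hull E \<subseteq> affine hull {p, p+d}"
      using EL by (metis affine_affine_hull hull_minimal)
    show "affine hull {p, p+d} \<subseteq> affine hull E"
      using pE pdE by (intro hull_mono) auto
  qed
  hence ah: "affine hull E = line_through p d" by (simp add: line_hull)
  have "aff_dim E = aff_dim {p, p+d}"
    by (metis \<open>affine hull E = affine hull {p, p+d}\<close> aff_dim_affine_hull)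
  also have "\<dots> = 1" using d0 by simp
  finally show ?thesis unfolding edge_dir_def using face pE ah d0 by blast
qed

lemma tangent_from:
  assumes pdK: "p + d \<in> K" and d0: "d \<noteq> 0" and a0: "a \<noteq> 0" and ad: "a \<bullet> d = 0"
    and ge: "\<And>x. x \<in> K \<Longrightarrow> a \<bullet> (x - p) \<ge> 0"
  shows "tangent_dir K p d"
proof -
  have "p + d \<in> line_through p d" unfolding line_through_def by (rule CollectI, rule exI[of _ 1]) simp
  thus ?thesis unfolding tangent_dir_def using pdK d0 a0 ad ge by blast
qed

lemma on_line1:
  assumes c: "cr d1 d2 > 0" and z: "cr d1 (x - p) = 0"
  shows "x \<in> line_through p d1"
proof -
  have "x - p = (cr (x-p) d2 / cr d1 d2) *\<^sub>R d1 + (cr d1 (x-p) / cr d1 d2) *\<^sub>R d2"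
    using decomp c by simp
  hence "x - p = (cr (x-p) d2 / cr d1 d2) *\<^sub>R d1" using z by simp
  hence "x = p + (cr (x-p) d2 / cr d1 d2) *\<^sub>R d1" by (simp add: algebra_simps)
  thus ?thesis unfolding line_through_def by blast
qed

lemma on_line2:
  assumes c: "cr d1 d2 > 0" and z: "cr (x - p) d2 = 0"
  shows "x \<in> line_through p d2"
proof -
  have "x - p = (cr (x-p) d2 / cr d1 d2) *\<^sub>R d1 + (cr d1 (x-p) / cr d1 d2) *\<^sub>R d2"
    using decomp c by simp
  hence "x - p = (cr d1 (x-p) / cr d1 d2) *\<^sub>R d2" using z by simp
  hence "x = p + (cr d1 (x-p) / cr d1 d2) *\<^sub>R d2" by (simp add: algebra_simps)
  thus ?thesis unfolding line_through_def by blast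
qed




lemma H_convex: "convex {x. cr d1 (x-p) \<ge> 0 \<and> cr (x-p) d2 \<ge> 0}"
proof -
  have "{x. cr d1 (x-p) \<ge> 0 \<and> cr (x-p) d2 \<ge> 0} = {x. rot d1 \<bullet> x \<ge> rot d1 \<bullet> p} \<inter> {x. rot d2 \<bullet> x \<le> rot d2 \<bullet> p}"
  proof -
    have e1: "cr d1 (x-p) = rot d1 \<bullet> x - rot d1 \<bullet> p" for x by (simp add: cr_def inner_diff_right)
    have e2: "cr (x-p) d2 = rot d2 \<bullet> p - rot d2 \<bullet> x" for x
      by (simp add: cr_eq inner2 algebra_simps)
    show ?thesis unfolding e1 e2 by auto
  qed
  thus ?thesis by (simp add: convex_Int convex_halfspace_ge convex_halfspace_le)
qed

lemma cr_p: "cr d (p - p) = 0" "cr (p - p) d = 0" by (simp_all add: cr_eq)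

theorem lemma3:
  fixes B :: "(real^2) set set" and Bi :: "(real^2) set" and p :: "real^2"
  assumes "finite B"
    and "\<forall>s\<in>B. \<exists>a b. s = closed_segment a b"
    and "Bi \<in> components (\<Union>B)"
  shows "\<forall>q. q \<notin> Lp Bi p \<union> Bi \<longrightarrow> clear_pt Bi q"
proof (intro allI impI)
  fix q assume q: "q \<notin> Lp Bi p \<union> Bi"
  have conn: "connected Bi" using assms(3) in_components_connected by blast
  have ne: "Bi \<noteq> {}" using assms(3) in_components_nonempty by blast
  have sub: "Bi \<subseteq> \<Union>B" using assms(3) in_components_subset by blast
  have "\<forall>s\<in>B. \<exists>ab. s = closed_segment (fst ab) (snd ab)"
  proof
    fix s assume "s \<in> B"
    then obtain a b where "s = closed_segment a b" using assms(2) by blast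
    thus "\<exists>ab. s = closed_segment (fst ab) (snd ab)" by (intro exI[of _ "(a,b)"]) simp
  qed
  hence "\<exists>g. \<forall>s\<in>B. s = closed_segment (fst (g s)) (snd (g s))" by (rule bchoice)
  then obtain g where g: "\<forall>s\<in>B. s = closed_segment (fst (g s)) (snd (g s))" by blast
  define fa where "fa s = fst (g s)" for s
  define fb where "fb s = snd (g s)" for s
  have fab: "closed_segment (fa s) (fb s) = s" if "s \<in> B" for s using g that unfolding fa_def fb_def by metis
  define B' where "B' = {s\<in>B. s \<subseteq> Bi}"
  have finB': "finite B'" using assms(1) by (simp add: B'_def)
  have BiU: "Bi = \<Union>B'"
  proof
    show "Bi \<subseteq> \<Union>B'"
    proof
      fix x assume x: "x \<in> Bi"
      then obtain s where s: "s \<in> B" "x \<in> s" using sub by blast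
      have "connected s" using fab[OF s(1)] connected_segment[of "fa s" "fb s"] by simp
      moreover have "s \<subseteq> \<Union>B" using s by blast
      moreover have "Bi \<inter> s \<noteq> {}" using x s by blast
      ultimately have "s \<subseteq> Bi" using components_maximal[OF assms(3)] by blast
      thus "x \<in> \<Union>B'" using s by (auto simp: B'_def)
    qed
    show "\<Union>B' \<subseteq> Bi" by (auto simp: B'_def)
  qed
  have cBi: "compact Bi"
  proof -
    have "\<forall>s\<in>B'. compact s"
    proof
      fix s assume "s \<in> B'"
      hence "s \<in> B" by (simp add: B'_def)
      thus "compact s" using fab[of s] compact_segment[of "fa s" "fb s"] by simp
    qed
    thus ?thesis using BiU finB' by (simp add: compact_Union)
  qed
  define S where "S = (\<Union>s\<in>B'. {fa s, fb s})"
  have finS: "finite S" using finB' by (simp add: S_def)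
  have SBi: "S \<subseteq> Bi"
  proof
    fix x assume "x \<in> S"
    then obtain s where s: "s \<in> B'" "x = fa s \<or> x = fb s" unfolding S_def by blast
    hence "x \<in> closed_segment (fa s) (fb s)" by auto
    moreover have "s \<in> B" using s(1) by (simp add: B'_def)
    ultimately have "x \<in> s" using fab[of s] by simp
    thus "x \<in> Bi" using s(1) by (auto simp: B'_def)
  qed
  have BiS: "Bi \<subseteq> convex hull S"
  proof
    fix x assume "x \<in> Bi"
    then obtain s where s: "s \<in> B'" "x \<in> s" using BiU by blast
    moreover have "s \<in> B" using s(1) by (simp add: B'_def)
    ultimately have "x \<in> convex hull {fa s, fb s}" using fab[of s] by (simp add: segment_convex_hull[symmetric])
    moreover have "convex hull {fa s, fb s} \<subseteq> convex hull S"
      using s(1) by (intro hull_mono) (auto simp: S_def)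
    ultimately show "x \<in> convex hull S" by blast
  qed
  define K where "K = convex hull Bi"
  have KS: "K = convex hull S"
  proof
    show "K \<subseteq> convex hull S" unfolding K_def using BiS by (simp add: convex_convex_hull hull_minimal)
    show "convex hull S \<subseteq> K" unfolding K_def using SBi by (rule hull_mono)
  qed
  have BiK: "Bi \<subseteq> K" unfolding K_def by (rule hull_subset)
  have cK: "compact K" unfolding K_def using cBi by (rule compact_convex_hull)
  have vK: "convex K" unfolding K_def by simp
  have Kne: "K \<noteq> {}" using BiK ne by blast
  have lineA: "(\<exists>a b. Bi = closed_segment a b) \<and> collinear (insert p Bi)"
    if "d \<noteq> 0" "Bi \<subseteq> line_through p d" for d
    using lineseg[OF cBi conn ne that(2,1)] line_collinear[OF that(2)] by blast
  have LpE: "Lp Bi p = (if (\<exists>a b. Bi = closed_segment a b) \<and> collinear (insert p Bi) then {}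
     else if p extreme_point_of K then wedge_by (edge_dir K p) p K
     else if p \<in> K then UNIV
     else wedge_by (tangent_dir K p) p K)"
    unfolding Lp_def Let_def K_def by (rule refl)
  show "clear_pt Bi q"
  proof (cases "(\<exists>a b. Bi = closed_segment a b) \<and> collinear (insert p Bi)")
    case True
    then obtain a b where ab: "Bi = closed_segment a b" by blast
    show ?thesis using q seg_clear[of q a b] ab by simp
  next
    case nA: False
    show ?thesis
    proof (cases "p extreme_point_of K")
      case True
      have L: "Lp Bi p = wedge_by (edge_dir K p) p K" using LpE[unfolded if_not_P[OF nA] if_P[OF True]] .
      have pS: "p \<in> S" using True KS extreme_point_of_convex_hull by metis
      have SK: "S \<subseteq> K" unfolding KS by (rule hull_subset)
      have pK: "p \<in> K" using pS SK by blast
      have Sne: "S - {p} \<noteq> {}"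
      proof
        assume "S - {p} = {}"
        hence "S \<subseteq> {p}" by blast
        hence "convex hull S \<subseteq> {p}" by (simp add: hull_minimal)
        hence "Bi = {p}" using BiS ne by blast
        hence "Bi = closed_segment p p" "collinear (insert p Bi)" by simp_all
        hence "(\<exists>a b. Bi = closed_segment a b) \<and> collinear (insert p Bi)" by blast
        thus False using nA by blast
      qed
      define K' where "K' = convex hull (S - {p})"
      have cK': "compact K'" unfolding K'_def using finS by (simp add: finite_imp_compact compact_convex_hull)
      have vK': "convex K'" unfolding K'_def by simp
      have K'ne: "K' \<noteq> {}" unfolding K'_def using Sne by simp
      have K'K: "K' \<subseteq> K" unfolding K'_def KS by (rule hull_mono) blast
      have pK': "p \<notin> K'"
      proof -
        have "convex (K - {p})" using extreme_point_of_stillconvex[OF vK] True by blast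
        moreover have "S - {p} \<subseteq> K - {p}" using SK by blast
        ultimately have "K' \<subseteq> K - {p}" unfolding K'_def by (simp add: hull_minimal)
        thus ?thesis by blast
      qed
      from cone_exists[OF cK' vK' K'ne pK'] show ?thesis
      proof
        assume "\<exists>d. d \<noteq> 0 \<and> K' \<subseteq> line_through p d"
        then obtain d where d: "d \<noteq> 0" "K' \<subseteq> line_through p d" by blast
        have "S \<subseteq> line_through p d"
        proof
          fix x assume "x \<in> S"
          show "x \<in> line_through p d"
          proof (cases "x = p")
            case True thus ?thesis by (simp add: p_in_line)
          next
            case False
            hence "x \<in> K'" using \<open>x \<in> S\<close> unfolding K'_def by (simp add: hull_inc)
            thus ?thesis using d by blast
          qed
        qed
        hence "K \<subseteq> line_through p d" unfolding KS by (simp add: hull_minimal line_convex)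
        hence "Bi \<subseteq> line_through p d" using BiK by blast
        thus ?thesis using lineA d nA by blast
      next
        assume "\<exists>y1\<in>K'. \<exists>y2\<in>K'. cr (y1-p) (y2-p) > 0 \<and> K' \<subseteq> {x. cr (y1-p) (x-p) \<ge> 0 \<and> cr (x-p) (y2-p) \<ge> 0}"
        then obtain y1 y2 where y: "y1 \<in> K'" "y2 \<in> K'" and c: "cr (y1-p) (y2-p) > 0"
          and H': "K' \<subseteq> {x. cr (y1-p) (x-p) \<ge> 0 \<and> cr (x-p) (y2-p) \<ge> 0}" by blast
        define d1 where "d1 = y1 - p"
        define d2 where "d2 = y2 - p"
        have c': "cr d1 d2 > 0" using c by (simp add: d1_def d2_def)
        have "S \<subseteq> {x. cr d1 (x-p) \<ge> 0 \<and> cr (x-p) d2 \<ge> 0}"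
        proof
          fix x assume "x \<in> S"
          show "x \<in> {x. cr d1 (x-p) \<ge> 0 \<and> cr (x-p) d2 \<ge> 0}"
          proof (cases "x = p")
            case True thus ?thesis by (simp add: cr_p)
          next
            case False
            hence "x \<in> K'" using \<open>x \<in> S\<close> unfolding K'_def by (simp add: hull_inc)
            thus ?thesis using H' by (auto simp: d1_def d2_def)
          qed
        qed
        hence H: "K \<subseteq> {x. cr d1 (x-p) \<ge> 0 \<and> cr (x-p) d2 \<ge> 0}"
          unfolding KS by (simp add: hull_minimal H_convex)
        have d10: "d1 \<noteq> 0" and d20: "d2 \<noteq> 0" using c' by (auto simp: cr_eq)
        have e1: "edge_dir K p d1"
        proof (rule edge_from[OF vK pK _ d10, of "rot d1"])
          show "p + d1 \<in> K" using y K'K by (auto simp: d1_def)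
          show "rot d1 \<bullet> x \<ge> rot d1 \<bullet> p" if "x \<in> K" for x
            using H that by (auto simp: cr_def inner_diff_right)
          show "rot d1 \<bullet> d1 = 0" by simp
          show "x \<in> line_through p d1" if "x \<in> K" "rot d1 \<bullet> x = rot d1 \<bullet> p" for x
            using on_line1[OF c', of x] that by (simp add: cr_def inner_diff_right)
        qed
        have e2: "edge_dir K p d2"
        proof (rule edge_from[OF vK pK _ d20, of "- rot d2"])
          show "p + d2 \<in> K" using y K'K by (auto simp: d2_def)
          show "(- rot d2) \<bullet> x \<ge> (- rot d2) \<bullet> p" if "x \<in> K" for x
            using H that by (auto simp: cr_swap inner_diff_right)
          show "(- rot d2) \<bullet> d2 = 0" by simp
          show "x \<in> line_through p d2" if "x \<in> K" "(- rot d2) \<bullet> x = (- rot d2) \<bullet> p" for x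
            using on_line2[OF c', of x] that by (simp add: cr_swap inner_diff_right)
        qed
        show ?thesis by (rule finish[OF c' H, of "edge_dir K p"]) (use e1 e2 q L BiK in auto)
      qed
    next
      case nE: False
      show ?thesis
      proof (cases "p \<in> K")
        case True
        have "Lp Bi p = UNIV" using LpE[unfolded if_not_P[OF nA] if_not_P[OF nE] if_P[OF True]] .
        thus ?thesis using q by simp
      next
        case pK: False
        have L: "Lp Bi p = wedge_by (tangent_dir K p) p K" using LpE[unfolded if_not_P[OF nA] if_not_P[OF nE] if_not_P[OF pK]] .
        from cone_exists[OF cK vK Kne pK] show ?thesis
        proof
          assume "\<exists>d. d \<noteq> 0 \<and> K \<subseteq> line_through p d"
          then obtain d where d: "d \<noteq> 0" "K \<subseteq> line_through p d" by blast
          hence "Bi \<subseteq> line_through p d" using BiK by blast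
          thus ?thesis using lineA d nA by blast
        next
          assume "\<exists>y1\<in>K. \<exists>y2\<in>K. cr (y1-p) (y2-p) > 0 \<and> K \<subseteq> {x. cr (y1-p) (x-p) \<ge> 0 \<and> cr (x-p) (y2-p) \<ge> 0}"
          then obtain y1 y2 where y: "y1 \<in> K" "y2 \<in> K" and c: "cr (y1-p) (y2-p) > 0"
            and H': "K \<subseteq> {x. cr (y1-p) (x-p) \<ge> 0 \<and> cr (x-p) (y2-p) \<ge> 0}" by blast
          define d1 where "d1 = y1 - p"
          define d2 where "d2 = y2 - p"
          have c': "cr d1 d2 > 0" using c by (simp add: d1_def d2_def)
          have H: "K \<subseteq> {x. cr d1 (x-p) \<ge> 0 \<and> cr (x-p) d2 \<ge> 0}" using H' by (simp add: d1_def d2_def)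
          have d10: "d1 \<noteq> 0" and d20: "d2 \<noteq> 0" using c' by (auto simp: cr_eq)
          have t1: "tangent_dir K p d1"
          proof (rule tangent_from[OF _ d10, where a = "rot d1"])
            show "p + d1 \<in> K" using y by (auto simp: d1_def)
            show "rot d1 \<noteq> 0" using d10 by simp
            show "rot d1 \<bullet> d1 = 0" by simp
            show "rot d1 \<bullet> (x - p) \<ge> 0" if "x \<in> K" for x
              using H that by (auto simp: cr_def)
          qed
          have t2: "tangent_dir K p d2"
          proof (rule tangent_from[OF _ d20, where a = "- rot d2"])
            show "p + d2 \<in> K" using y by (auto simp: d2_def)
            show "- rot d2 \<noteq> 0" using d20 by simp
            show "(- rot d2) \<bullet> d2 = 0" by simp
            show "(- rot d2) \<bullet> (x - p) \<ge> 0" if "x \<in> K" for x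
              using H that by (auto simp: cr_swap)
          qed
          show ?thesis by (rule finish[OF c' H, of "tangent_dir K p"]) (use t1 t2 q L BiK in auto)
        qed
      qed
    qed
  qed
qed


end
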